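(* Let $H$ be an inner product space over $\mathbb{K}\in\{\mathbb{R},\mathbb{C}\}$. Let $x,y\in H$ with $x\ne0$, $y\neq 0$, and let $a,b\in\mathbb{K}$ satisfy $$\operatorname{Re}\langle x-ay,\ by-x\rangle\ge 0 .$$ (a) If $\operatorname{Re}(a\bar b)>0$, then $$\|x\|^2\|y\|^2\le \frac14\,\frac{\big(\operatorname{Re}[(\bar a+\bar b)\langle x,y\rangle]\big)^2}{\operatorname{Re}(a\bar b)}\le \frac14\,\frac{|a+b|^2}{\operatorname{Re}(a\bar b)}\,|\langle x,y\rangle|^2 .$$ The constant $\tfrac14$ is best possible in both inequalities. That is, for every $l\in(0,\tfrac14)$ there exist $H$, nonzero $x,y\in H$ and $a,b\in\mathbb{K}$ with $\operatorname{Re}\langle x-ay,by-x\rangle\ge0$ and $\operatorname{Re}(a\bar b)>0$ for which $\|x\|^2\|y\|^2> l\,\frac{(\operatorname{Re}[(\bar a+\bar b)\langle x,y\rangle])^2}{\operatorname{Re}(a\bar b)}$. Likewise there exist such data for which $\|x\|^2\|y\|^2> l\,\frac{|a+b|^2}{\operatorname{Re}(a\bar b)}|\langle x,y\rangle|^2$. (b) If $\operatorname{Re}(a\bar b)=0$, then $$\|x\|^2\le \operatorname{Re}[(\bar a+\bar b)\langle x,y\rangle]\le |a+b|\,|\langle x,y\rangle| .$$ (c) If $\operatorname{Re}(a\bar b)<0$, then $$\|x\|^2\le \operatorname{Re}[(\bar a+\bar b)\langle x,y\rangle]-\operatorname{Re}(a\bar b)\|y\|^2\le |a+b|\,|\langle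 x,y\rangle|-\operatorname{Re}(a\bar b)\|y\|^2 .$$
   Context: The inner product $\langle\cdot,\cdot\rangle$ is linear in the first argument and conjugate-linear in the second. $\|u\|=\sqrt{\langle u,u\rangle}$ is the induced norm, and $\bar a$ denotes the complex conjugate of $a$ (equal to $a$ when $\mathbb{K}=\mathbb{R}$). *)

theory Defs
  imports "HOL-Analysis.Analysis"
begin

text \<open>Complex inner product spaces are not in the distribution library, so we
define them: an abelian group with a complex scalar multiplication satisfying
the vector-space axioms, and an inner product linear in the first argument and
conjugate-linear (via conjugate symmetry) in the second, positive definite.\<close>

class complex_inner_space = ab_group_add +
  fixes scaleC :: "complex \<Rightarrow> 'a \<Rightarrow> 'a" (infixr \<open>*\<^sub>C\<close> 75)
    and cinner :: "'a \<Rightarrow> 'a \<Rightarrow> complex"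
  assumes scaleC_add_right: "a *\<^sub>C (x + y) = a *\<^sub>C x + a *\<^sub>C y"
    and scaleC_add_left: "(a + b) *\<^sub>C x = a *\<^sub>C x + b *\<^sub>C x"
    and scaleC_scaleC: "a *\<^sub>C (b *\<^sub>C x) = (a * b) *\<^sub>C x"
    and scaleC_one: "1 *\<^sub>C x = x"
    and cinner_add_left: "cinner (x + y) z = cinner x z + cinner y z"
    and cinner_scaleC_left: "cinner (a *\<^sub>C x) y = a * cinner x y"
    and cinner_commute: "cinner x y = cnj (cinner y x)"
    and cinner_self_nonneg: "Im (cinner x x) = 0 \<and> 0 \<le> Re (cinner x x)"
    and cinner_self_eq_zero: "cinner x x = 0 \<longleftrightarrow> x = 0"

definition cnorm :: "'a::complex_inner_space \<Rightarrow> real" where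
  "cnorm x = sqrt (Re (cinner x x))"

end

theory Submission
  imports Defs
begin


lemma core1:
  fixes nx ny P S :: real
  assumes "nx > 0" "ny > 0" "nx + P*ny \<le> S" "P > 0"
  shows "nx*ny \<le> 1/4*S^2/P"
proof -
  have h: "(nx+P*ny)^2 = (nx-P*ny)^2 + 4*P*(nx*ny)" by (simp add: power2_eq_square algebra_simps)
  have "4*P*(nx*ny) \<le> (nx + P*ny)^2" unfolding h by simp
  also have "\<dots> \<le> S^2" using assms by (intro power_mono) (auto intro: add_nonneg_nonneg)
  finally have "(nx*ny) * (4*P) \<le> S^2" by (simp only: mult.commute)
  then have "nx*ny \<le> S^2 / (4*P)" using assms(4) by (subst pos_le_divide_eq) auto
  moreover have "1/4*S^2/P = S^2 / (4*P)" by simp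
  ultimately show ?thesis by simp
qed

lemma core2:
  fixes P S A C :: real
  assumes "P > 0" "S^2 \<le> A*C"
  shows "1/4*S^2/P \<le> 1/4*A/P*C"
proof -
  have "S^2 / (4*P) \<le> (A*C) / (4*P)" using assms by (intro divide_right_mono) auto
  moreover have "1/4*S^2/P = S^2 / (4*P)" "1/4*A/P*C = (A*C) / (4*P)" by simp_all
  ultimately show ?thesis by simp
qed

lemma cinner_zero_left[simp]: "cinner 0 y = 0"
proof -
  have "cinner (0+0) y = cinner 0 y + cinner 0 y" by (rule cinner_add_left)
  then show ?thesis by simp
qed
lemma cinner_minus_left: "cinner (-x) y = - cinner x y"
proof -
  have h0: "cinner (x + -x) y = 0" by (simp only: right_minus cinner_zero_left)
  have h: "cinner x y + cinner (-x) y = 0" by (rule trans[OF cinner_add_left[symmetric] h0])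
  show ?thesis by (rule minus_unique[OF h, symmetric])
qed
lemma cinner_diff_left: "cinner (x - z) y = cinner x y - cinner z y"
  by (simp only: diff_conv_add_uminus cinner_add_left cinner_minus_left)
lemma cinner_diff_right: "cinner y (x - z) = cinner y x - cinner y z"
  by (simp only: cinner_commute[of y "x-z"] cinner_commute[of y x] cinner_commute[of y z]
      cinner_diff_left complex_cnj_diff)
lemma cinner_scaleC_right: "cinner x (a *\<^sub>C y) = cnj a * cinner x y"
  by (simp only: cinner_commute[of x "a *\<^sub>C y"] cinner_commute[of x y] cinner_scaleC_left complex_cnj_mult)
lemma cinner_self_real: "cinner x x = complex_of_real (Re (cinner x x))"
  using cinner_self_nonneg[of x] by (simp add: complex_eq_iff)

lemma cnorm_sq: "cnorm x ^ 2 = Re (cinner x x)"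
  unfolding cnorm_def using cinner_self_nonneg[of x] by simp

lemma cnorm_pos: "x \<noteq> 0 \<Longrightarrow> cnorm x ^ 2 > 0"
proof -
  assume "x \<noteq> 0"
  then have ne: "cinner x x \<noteq> 0" using cinner_self_eq_zero[of x] by blast
  have im: "Im (cinner x x) = 0" and ge: "0 \<le> Re (cinner x x)" using cinner_self_nonneg[of x] by auto
  have "Re (cinner x x) \<noteq> 0"
  proof
    assume "Re (cinner x x) = 0"
    then have "cinner x x = 0" using im by (simp add: complex_eq_iff)
    then show False using ne by contradiction
  qed
  then show ?thesis using ge unfolding cnorm_sq by linarith
qed

lemma key_c:
  fixes x y :: "'c::complex_inner_space"
  assumes "Re (cinner (x - a *\<^sub>C y) (b *\<^sub>C y - x)) \<ge> 0"
  shows "cnorm x ^ 2 + Re (a * cnj b) * cnorm y ^ 2 \<le> Re ((cnj a + cnj b) * cinner x y)"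
proof -
  have e: "cinner (x - a *\<^sub>C y) (b *\<^sub>C y - x) = cnj b * cinner x y - cinner x x - a * cnj b * cinner y y + a * cnj (cinner x y)"
    by (simp only: cinner_diff_left cinner_diff_right cinner_scaleC_left cinner_scaleC_right
        cinner_commute[of y x]; algebra)
  have r1: "Re (a * cnj b * cinner y y) = Re (a * cnj b) * cnorm y ^ 2"
  proof -
    have "Re (a * cnj b * cinner y y) = Re (a * cnj b * complex_of_real (Re (cinner y y)))"
      by (subst cinner_self_real) (rule refl)
    also have "\<dots> = Re (a * cnj b) * Re (cinner y y)" by simp
    finally show ?thesis by (simp only: cnorm_sq)
  qed
  have r2: "Re (a * cnj (cinner x y)) = Re (cnj a * cinner x y)" by simp
  have r3: "Re ((cnj a + cnj b) * cinner x y) = Re (cnj a * cinner x y) + Re (cnj b * cinner x y)"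
    by (simp only: distrib_right plus_complex.sel)
  have r4: "Re (cinner (x - a *\<^sub>C y) (b *\<^sub>C y - x)) = Re (cnj b * cinner x y) - Re (cinner x x) - Re (a * cnj b * cinner y y) + Re (a * cnj (cinner x y))"
    by (simp only: e minus_complex.sel plus_complex.sel)
  show ?thesis using assms r1 r2 r3 r4 cnorm_sq[of x] by linarith
qed

lemma key_r:
  fixes x y :: "'r::real_inner"
  assumes "(x - a *\<^sub>R y) \<bullet> (b *\<^sub>R y - x) \<ge> 0"
  shows "norm x ^ 2 + a * b * norm y ^ 2 \<le> (a + b) * (x \<bullet> y)"
proof -
  have "(x - a *\<^sub>R y) \<bullet> (b *\<^sub>R y - x) = b * (x \<bullet> y) - x \<bullet> x - a * b * (y \<bullet> y) + a * (x \<bullet> y)"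
    by (simp add: inner_diff_left inner_diff_right inner_commute[of y x] algebra_simps)
  moreover have "norm x ^ 2 = x \<bullet> x" "a * b * norm y ^ 2 = a * b * (y \<bullet> y)" by (simp_all only: power2_norm_eq_inner)
  moreover have "(a + b) * (x \<bullet> y) = a * (x \<bullet> y) + b * (x \<bullet> y)" by (rule distrib_right)
  ultimately show ?thesis using assms by linarith
qed



lemma part_r_ineq:
  "(\<forall>(x::'r::real_inner) y (a::real) b.
      x \<noteq> 0 \<and> y \<noteq> 0 \<and> (x - a *\<^sub>R y) \<bullet> (b *\<^sub>R y - x) \<ge> 0 \<longrightarrow>
        (a * b > 0 \<longrightarrow>
           norm x ^ 2 * norm y ^ 2 \<le> 1/4 * ((a + b) * (x \<bullet> y))^2 / (a * b) \<and>
           1/4 * ((a + b) * (x \<bullet> y))^2 / (a * b) \<le> 1/4 * \<bar>a + b\<bar>^2 / (a * b) * \<bar>x \<bullet> y\<bar>^2) \<and>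
        (a * b = 0 \<longrightarrow>
           norm x ^ 2 \<le> (a + b) * (x \<bullet> y) \<and>
           (a + b) * (x \<bullet> y) \<le> \<bar>a + b\<bar> * \<bar>x \<bullet> y\<bar>) \<and>
        (a * b < 0 \<longrightarrow>
           norm x ^ 2 \<le> (a + b) * (x \<bullet> y) - a * b * norm y ^ 2 \<and>
           (a + b) * (x \<bullet> y) - a * b * norm y ^ 2 \<le> \<bar>a + b\<bar> * \<bar>x \<bullet> y\<bar> - a * b * norm y ^ 2))"
proof (intro allI impI conjI)

  fix x y :: "'r::real_inner" and a b :: real
  assume h: "x \<noteq> 0 \<and> y \<noteq> 0 \<and> (x - a *\<^sub>R y) \<bullet> (b *\<^sub>R y - x) \<ge> 0"
  have k: "norm x ^ 2 + a * b * norm y ^ 2 \<le> (a + b) * (x \<bullet> y)" using h by (intro key_r) blast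
  have nx: "norm x ^ 2 > 0" "norm y ^ 2 > 0" using h by auto
  have sq: "((a + b) * (x \<bullet> y))^2 \<le> \<bar>a + b\<bar>^2 * \<bar>x \<bullet> y\<bar>^2"
    by (simp add: power_mult_distrib)
  have ab: "(a + b) * (x \<bullet> y) \<le> \<bar>a + b\<bar> * \<bar>x \<bullet> y\<bar>"
    using abs_ge_self[of "(a + b) * (x \<bullet> y)"] by (simp add: abs_mult)
  { assume "a * b > 0"
    then show "norm x ^ 2 * norm y ^ 2 \<le> 1/4 * ((a + b) * (x \<bullet> y))^2 / (a * b)"
      using core1[OF nx k] by simp
    show "1/4 * ((a + b) * (x \<bullet> y))^2 / (a * b) \<le> 1/4 * \<bar>a + b\<bar>^2 / (a * b) * \<bar>x \<bullet> y\<bar>^2"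
      using core2[OF \<open>a*b>0\<close> sq] by simp }
  { assume "a * b = 0"
    then have "a * b * norm y ^ 2 = 0" by simp
    then show "norm x ^ 2 \<le> (a + b) * (x \<bullet> y)" using k by linarith
    show "(a + b) * (x \<bullet> y) \<le> \<bar>a + b\<bar> * \<bar>x \<bullet> y\<bar>" by (rule ab) }
  { assume "a * b < 0"
    then show "norm x ^ 2 \<le> (a + b) * (x \<bullet> y) - a * b * norm y ^ 2" using k by simp
    show "(a + b) * (x \<bullet> y) - a * b * norm y ^ 2 \<le> \<bar>a + b\<bar> * \<bar>x \<bullet> y\<bar> - a * b * norm y ^ 2"
      using ab by simp }
qed

lemma part_r_sharp:
  "((\<exists>v::'r::real_inner. v \<noteq> 0) \<longrightarrow>
      (\<forall>l::real. 0 < l \<and> l < 1/4 \<longrightarrow>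
        (\<exists>(x::'r) y (a::real) b. x \<noteq> 0 \<and> y \<noteq> 0 \<and> (x - a *\<^sub>R y) \<bullet> (b *\<^sub>R y - x) \<ge> 0 \<and>
           a * b > 0 \<and> norm x ^ 2 * norm y ^ 2 > l * ((a + b) * (x \<bullet> y))^2 / (a * b)) \<and>
        (\<exists>(x::'r) y (a::real) b. x \<noteq> 0 \<and> y \<noteq> 0 \<and> (x - a *\<^sub>R y) \<bullet> (b *\<^sub>R y - x) \<ge> 0 \<and>
           a * b > 0 \<and> norm x ^ 2 * norm y ^ 2 > l * \<bar>a + b\<bar>^2 / (a * b) * \<bar>x \<bullet> y\<bar>^2)))"
proof (intro allI impI conjI)
  fix l :: real
  assume "\<exists>v::'r. v \<noteq> 0" and l: "0 < l \<and> l < 1/4"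
  then obtain v :: 'r where v: "v \<noteq> 0" by blast

  define N where "N = norm v ^ 2"
  have p: "N > 0" using v unfolding N_def by simp
  have vv: "v \<bullet> v = N" unfolding N_def by (simp add: power2_norm_eq_inner)
  have z: "(v - 1 *\<^sub>R v) \<bullet> (1 *\<^sub>R v - v) = 0" by simp
  have lt: "l * (2 * N)^2 < N * N"
  proof -
    have "l * (2 * N)^2 = (4*l) * (N * N)" by (simp add: power2_eq_square)
    also have "\<dots> < 1 * (N * N)" using l p by (intro mult_strict_right_mono) auto
    finally show ?thesis by simp
  qed
  have e1: "l * (((1::real) + 1) * (v \<bullet> v))^2 / (1 * 1) = l * (2 * N)^2" unfolding vv by simp
  have e2: "l * \<bar>(1::real) + 1\<bar>^2 / (1 * 1) * \<bar>v \<bullet> v\<bar>^2 = l * (2 * N)^2"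
    unfolding vv using p by (simp add: power_mult_distrib)
  have nn: "norm v ^ 2 * norm v ^ 2 = N * N" unfolding N_def ..
  have w1: "v \<noteq> 0 \<and> v \<noteq> 0 \<and> (v - (1::real) *\<^sub>R v) \<bullet> ((1::real) *\<^sub>R v - v) \<ge> 0 \<and>
           (1::real) * 1 > 0 \<and> norm v ^ 2 * norm v ^ 2 > l * ((1 + 1) * (v \<bullet> v))^2 / (1 * 1)"
    using v z lt e1 nn by (simp only: e1 nn) (simp add: z v lt)
  have w2: "v \<noteq> 0 \<and> v \<noteq> 0 \<and> (v - (1::real) *\<^sub>R v) \<bullet> ((1::real) *\<^sub>R v - v) \<ge> 0 \<and>
           (1::real) * 1 > 0 \<and> norm v ^ 2 * norm v ^ 2 > l * \<bar>1 + 1\<bar>^2 / (1 * 1) * \<bar>v \<bullet> v\<bar>^2"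
    using v z lt e2 nn by (simp only: e2 nn) (simp add: z v lt)
  show "\<exists>(x::'r) y (a::real) b. x \<noteq> 0 \<and> y \<noteq> 0 \<and> (x - a *\<^sub>R y) \<bullet> (b *\<^sub>R y - x) \<ge> 0 \<and>
           a * b > 0 \<and> norm x ^ 2 * norm y ^ 2 > l * ((a + b) * (x \<bullet> y))^2 / (a * b)"
    using w1 by blast
  show "\<exists>(x::'r) y (a::real) b. x \<noteq> 0 \<and> y \<noteq> 0 \<and> (x - a *\<^sub>R y) \<bullet> (b *\<^sub>R y - x) \<ge> 0 \<and>
           a * b > 0 \<and> norm x ^ 2 * norm y ^ 2 > l * \<bar>a + b\<bar>^2 / (a * b) * \<bar>x \<bullet> y\<bar>^2"
    using w2 by blast

qed

lemma part_c_ineq: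
  "(\<forall>(x::'c::complex_inner_space) y (a::complex) b.
      x \<noteq> 0 \<and> y \<noteq> 0 \<and> Re (cinner (x - a *\<^sub>C y) (b *\<^sub>C y - x)) \<ge> 0 \<longrightarrow>
        (Re (a * cnj b) > 0 \<longrightarrow>
           cnorm x ^ 2 * cnorm y ^ 2 \<le> 1/4 * (Re ((cnj a + cnj b) * cinner x y))^2 / Re (a * cnj b) \<and>
           1/4 * (Re ((cnj a + cnj b) * cinner x y))^2 / Re (a * cnj b)
             \<le> 1/4 * (cmod (a + b))^2 / Re (a * cnj b) * (cmod (cinner x y))^2) \<and>
        (Re (a * cnj b) = 0 \<longrightarrow>
           cnorm x ^ 2 \<le> Re ((cnj a + cnj b) * cinner x y) \<and>
           Re ((cnj a + cnj b) * cinner x y) \<le> cmod (a + b) * cmod (cinner x y)) \<and>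
        (Re (a * cnj b) < 0 \<longrightarrow>
           cnorm x ^ 2 \<le> Re ((cnj a + cnj b) * cinner x y) - Re (a * cnj b) * cnorm y ^ 2 \<and>
           Re ((cnj a + cnj b) * cinner x y) - Re (a * cnj b) * cnorm y ^ 2
             \<le> cmod (a + b) * cmod (cinner x y) - Re (a * cnj b) * cnorm y ^ 2))"
proof (intro allI impI conjI)
  fix x y :: "'c::complex_inner_space" and a b :: complex
  assume h: "x \<noteq> 0 \<and> y \<noteq> 0 \<and> Re (cinner (x - a *\<^sub>C y) (b *\<^sub>C y - x)) \<ge> 0"
  define P where "P = Re (a * cnj b)"
  define S where "S = Re ((cnj a + cnj b) * cinner x y)"
  have k: "cnorm x ^ 2 + P * cnorm y ^ 2 \<le> S" using h key_c unfolding P_def S_def by blast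
  have nx: "cnorm x ^ 2 > 0" "cnorm y ^ 2 > 0" using h cnorm_pos by auto
  have m: "cmod ((cnj a + cnj b) * cinner x y) = cmod (a + b) * cmod (cinner x y)"
  proof -
    have "cnj a + cnj b = cnj (a + b)" by simp
    then show ?thesis by (simp only: norm_mult complex_mod_cnj)
  qed
  have ab: "S \<le> cmod (a + b) * cmod (cinner x y)"
    unfolding S_def m[symmetric] by (rule complex_Re_le_cmod)
  have r: "\<bar>S\<bar> \<le> cmod ((cnj a + cnj b) * cinner x y)" unfolding S_def by (rule abs_Re_le_cmod)
  have "\<bar>S\<bar>^2 \<le> (cmod ((cnj a + cnj b) * cinner x y))^2" by (rule power_mono[OF r abs_ge_zero])
  then have sq: "S^2 \<le> (cmod (a + b))^2 * (cmod (cinner x y))^2"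
    unfolding m power_mult_distrib power2_abs .
  { assume "P > 0"
    then show "cnorm x ^ 2 * cnorm y ^ 2 \<le> 1/4 * S^2 / P"
      using core1[OF nx k] by simp
    show "1/4 * S^2 / P \<le> 1/4 * (cmod (a + b))^2 / P * (cmod (cinner x y))^2"
      using core2[OF \<open>P>0\<close> sq] by simp }
  { assume "P = 0"
    then show "cnorm x ^ 2 \<le> S" using k by simp
    show "S \<le> cmod (a + b) * cmod (cinner x y)" by (rule ab) }
  { assume "P < 0"
    then show "cnorm x ^ 2 \<le> S - P * cnorm y ^ 2" using k by simp
    show "S - P * cnorm y ^ 2 \<le> cmod (a + b) * cmod (cinner x y) - P * cnorm y ^ 2"
      using ab by simp }
qed

lemma part_c_sharp:
  "((\<exists>v::'c::complex_inner_space. v \<noteq> 0) \<longrightarrow>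
      (\<forall>l::real. 0 < l \<and> l < 1/4 \<longrightarrow>
        (\<exists>(x::'c) y (a::complex) b. x \<noteq> 0 \<and> y \<noteq> 0 \<and>
           Re (cinner (x - a *\<^sub>C y) (b *\<^sub>C y - x)) \<ge> 0 \<and> Re (a * cnj b) > 0 \<and>
           cnorm x ^ 2 * cnorm y ^ 2 > l * (Re ((cnj a + cnj b) * cinner x y))^2 / Re (a * cnj b)) \<and>
        (\<exists>(x::'c) y (a::complex) b. x \<noteq> 0 \<and> y \<noteq> 0 \<and>
           Re (cinner (x - a *\<^sub>C y) (b *\<^sub>C y - x)) \<ge> 0 \<and> Re (a * cnj b) > 0 \<and>
           cnorm x ^ 2 * cnorm y ^ 2 > l * (cmod (a + b))^2 / Re (a * cnj b) * (cmod (cinner x y))^2)))"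
proof (intro allI impI conjI)
  fix l :: real
  assume "\<exists>v::'c. v \<noteq> 0" and l: "0 < l \<and> l < 1/4"
  then obtain v :: 'c where v: "v \<noteq> 0" by blast
  have p: "cnorm v ^ 2 > 0" using v cnorm_pos by blast
  have vv: "cinner v v = complex_of_real (cnorm v ^ 2)" unfolding cnorm_sq by (rule cinner_self_real)
  have "l * (2 * cnorm v ^ 2)^2 < cnorm v ^ 2 * cnorm v ^ 2"
  proof -
    have "l * (2 * cnorm v ^ 2)^2 = (4*l) * (cnorm v ^ 2 * cnorm v ^ 2)" by (simp add: power2_eq_square)
    also have "\<dots> < 1 * (cnorm v ^ 2 * cnorm v ^ 2)" using l p by (intro mult_strict_right_mono) auto
    finally show ?thesis by simp
  qed
  moreover have z: "v - 1 *\<^sub>C v = 0" by (simp add: scaleC_one)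
  moreover have "cmod (complex_of_real (cnorm v ^ 2)) = cnorm v ^ 2" using p by (simp only: norm_of_real)
  ultimately have main: "cnorm v ^ 2 * cnorm v ^ 2 > l * (Re ((cnj 1 + cnj 1) * cinner v v))^2 / Re (1 * cnj 1)"
    "cnorm v ^ 2 * cnorm v ^ 2 > l * (cmod (1 + 1))^2 / Re (1 * cnj 1) * (cmod (cinner v v))^2"
    "Re (cinner (v - 1 *\<^sub>C v) (1 *\<^sub>C v - v)) \<ge> 0"
    unfolding vv by (simp_all add: power_mult_distrib)
  show "\<exists>(x::'c) y (a::complex) b. x \<noteq> 0 \<and> y \<noteq> 0 \<and>
           Re (cinner (x - a *\<^sub>C y) (b *\<^sub>C y - x)) \<ge> 0 \<and> Re (a * cnj b) > 0 \<and>
           cnorm x ^ 2 * cnorm y ^ 2 > l * (Re ((cnj a + cnj b) * cinner x y))^2 / Re (a * cnj b)"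
    by (intro exI[of _ v] exI[of _ 1]) (use v main in simp)
  show "\<exists>(x::'c) y (a::complex) b. x \<noteq> 0 \<and> y \<noteq> 0 \<and>
           Re (cinner (x - a *\<^sub>C y) (b *\<^sub>C y - x)) \<ge> 0 \<and> Re (a * cnj b) > 0 \<and>
           cnorm x ^ 2 * cnorm y ^ 2 > l * (cmod (a + b))^2 / Re (a * cnj b) * (cmod (cinner x y))^2"
    by (intro exI[of _ v] exI[of _ 1]) (use v main in simp)

qed

theorem theorem2:
  shows
  \<comment> \<open>Case K = R\<close>
  "(\<forall>(x::'r::real_inner) y (a::real) b.
      x \<noteq> 0 \<and> y \<noteq> 0 \<and> (x - a *\<^sub>R y) \<bullet> (b *\<^sub>R y - x) \<ge> 0 \<longrightarrow>
        (a * b > 0 \<longrightarrow>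
           norm x ^ 2 * norm y ^ 2 \<le> 1/4 * ((a + b) * (x \<bullet> y))^2 / (a * b) \<and>
           1/4 * ((a + b) * (x \<bullet> y))^2 / (a * b) \<le> 1/4 * \<bar>a + b\<bar>^2 / (a * b) * \<bar>x \<bullet> y\<bar>^2) \<and>
        (a * b = 0 \<longrightarrow>
           norm x ^ 2 \<le> (a + b) * (x \<bullet> y) \<and>
           (a + b) * (x \<bullet> y) \<le> \<bar>a + b\<bar> * \<bar>x \<bullet> y\<bar>) \<and>
        (a * b < 0 \<longrightarrow>
           norm x ^ 2 \<le> (a + b) * (x \<bullet> y) - a * b * norm y ^ 2 \<and>
           (a + b) * (x \<bullet> y) - a * b * norm y ^ 2 \<le> \<bar>a + b\<bar> * \<bar>x \<bullet> y\<bar> - a * b * norm y ^ 2))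
   \<and> ((\<exists>v::'r. v \<noteq> 0) \<longrightarrow>
      (\<forall>l::real. 0 < l \<and> l < 1/4 \<longrightarrow>
        (\<exists>(x::'r) y (a::real) b. x \<noteq> 0 \<and> y \<noteq> 0 \<and> (x - a *\<^sub>R y) \<bullet> (b *\<^sub>R y - x) \<ge> 0 \<and>
           a * b > 0 \<and> norm x ^ 2 * norm y ^ 2 > l * ((a + b) * (x \<bullet> y))^2 / (a * b)) \<and>
        (\<exists>(x::'r) y (a::real) b. x \<noteq> 0 \<and> y \<noteq> 0 \<and> (x - a *\<^sub>R y) \<bullet> (b *\<^sub>R y - x) \<ge> 0 \<and>
           a * b > 0 \<and> norm x ^ 2 * norm y ^ 2 > l * \<bar>a + b\<bar>^2 / (a * b) * \<bar>x \<bullet> y\<bar>^2)))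
   \<and>
  \<comment> \<open>Case K = C\<close>
   (\<forall>(x::'c::complex_inner_space) y (a::complex) b.
      x \<noteq> 0 \<and> y \<noteq> 0 \<and> Re (cinner (x - a *\<^sub>C y) (b *\<^sub>C y - x)) \<ge> 0 \<longrightarrow>
        (Re (a * cnj b) > 0 \<longrightarrow>
           cnorm x ^ 2 * cnorm y ^ 2 \<le> 1/4 * (Re ((cnj a + cnj b) * cinner x y))^2 / Re (a * cnj b) \<and>
           1/4 * (Re ((cnj a + cnj b) * cinner x y))^2 / Re (a * cnj b)
             \<le> 1/4 * (cmod (a + b))^2 / Re (a * cnj b) * (cmod (cinner x y))^2) \<and>
        (Re (a * cnj b) = 0 \<longrightarrow>
           cnorm x ^ 2 \<le> Re ((cnj a + cnj b) * cinner x y) \<and>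
           Re ((cnj a + cnj b) * cinner x y) \<le> cmod (a + b) * cmod (cinner x y)) \<and>
        (Re (a * cnj b) < 0 \<longrightarrow>
           cnorm x ^ 2 \<le> Re ((cnj a + cnj b) * cinner x y) - Re (a * cnj b) * cnorm y ^ 2 \<and>
           Re ((cnj a + cnj b) * cinner x y) - Re (a * cnj b) * cnorm y ^ 2
             \<le> cmod (a + b) * cmod (cinner x y) - Re (a * cnj b) * cnorm y ^ 2))
   \<and> ((\<exists>v::'c. v \<noteq> 0) \<longrightarrow>
      (\<forall>l::real. 0 < l \<and> l < 1/4 \<longrightarrow>
        (\<exists>(x::'c) y (a::complex) b. x \<noteq> 0 \<and> y \<noteq> 0 \<and>
           Re (cinner (x - a *\<^sub>C y) (b *\<^sub>C y - x)) \<ge> 0 \<and> Re (a * cnj b) > 0 \<and>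
           cnorm x ^ 2 * cnorm y ^ 2 > l * (Re ((cnj a + cnj b) * cinner x y))^2 / Re (a * cnj b)) \<and>
        (\<exists>(x::'c) y (a::complex) b. x \<noteq> 0 \<and> y \<noteq> 0 \<and>
           Re (cinner (x - a *\<^sub>C y) (b *\<^sub>C y - x)) \<ge> 0 \<and> Re (a * cnj b) > 0 \<and>
           cnorm x ^ 2 * cnorm y ^ 2 > l * (cmod (a + b))^2 / Re (a * cnj b) * (cmod (cinner x y))^2)))"
    apply (intro conjI)
     apply (rule part_r_ineq)
    apply (rule part_r_sharp)
   apply (rule part_c_ineq)
  apply (rule part_c_sharp)
  done

end
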